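(* Let $T\subseteq V$ be any set and $\tilde C\subseteq C$ a nonempty set of colors, and define $\tilde f_c(A)=f_c(A\cup T)$ for $A\subseteq V$, $c\in\tilde C$. For integers $b\ge 0$ let $\widetilde{\mathrm{OPT}}_b=\max_{S\subseteq V,\,|S|\le b}\min_{c\in\tilde C}\tilde f_c(S)$. Let $\gamma>0$ be such that $\tilde f_c(v\mid\emptyset)\le\gamma\,\widetilde{\mathrm{OPT}}_B$ for all $v\in V$ and $c\in\tilde C$. Then for every positive integer $\tilde B\le B$, \[ \widetilde{\mathrm{OPT}}_{\tilde B}\;\ge\;\left(1-\sqrt{3\gamma\frac{B}{\tilde B}\log k}\right)\frac{\tilde B}{B}\,\widetilde{\mathrm{OPT}}_B . \]
   Context: Setup: $V$ is a finite nonempty ground set, $C$ is a finite nonempty set of "colors", $k=|C|$. For each $c\in C$, $f_c\colon 2^V\to\mathbb{R}_{\ge 0}$ is monotone and submodular. $B$ is a positive integer (the budget). $f(T\mid S)=f(S\cup T)-f(S)$ and $f(v\mid S)=f(\{v\}\mid S)$. $\log$ is the natural logarithm. *)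

theory Defs
  imports Complex_Main
begin

definition monotone_set_fun :: "'a set \<Rightarrow> ('a set \<Rightarrow> real) \<Rightarrow> bool" where
  "monotone_set_fun V f \<longleftrightarrow> (\<forall>A B. A \<subseteq> B \<and> B \<subseteq> V \<longrightarrow> f A \<le> f B)"

definition submodular_set_fun :: "'a set \<Rightarrow> ('a set \<Rightarrow> real) \<Rightarrow> bool" where
  "submodular_set_fun V f \<longleftrightarrow>
     (\<forall>A B. A \<subseteq> V \<and> B \<subseteq> V \<longrightarrow> f (A \<union> B) + f (A \<inter> B) \<le> f A + f B)"

definition nonneg_set_fun :: "'a set \<Rightarrow> ('a set \<Rightarrow> real) \<Rightarrow> bool" where
  "nonneg_set_fun V f \<longleftrightarrow> (\<forall>A. A \<subseteq> V \<longrightarrow> 0 \<le> f A)"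

definition marg :: "('a set \<Rightarrow> real) \<Rightarrow> 'a set \<Rightarrow> 'a set \<Rightarrow> real" where
  "marg f X S = f (S \<union> X) - f S"

definition min_obj :: "('c \<Rightarrow> 'a set \<Rightarrow> real) \<Rightarrow> 'c set \<Rightarrow> 'a set \<Rightarrow> 'a set \<Rightarrow> real" where
  "min_obj f Ct T S = Min ((\<lambda>c. f c (S \<union> T)) ` Ct)"

definition OPT_tilde :: "'a set \<Rightarrow> ('c \<Rightarrow> 'a set \<Rightarrow> real) \<Rightarrow> 'c set \<Rightarrow> 'a set \<Rightarrow> nat \<Rightarrow> real" where
  "OPT_tilde V f Ct T b = Max {min_obj f Ct T S | S. S \<subseteq> V \<and> card S \<le> b}"

end

theory Submission
  imports Defs
begin


lemma exp_neg_quad: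
  fixes x :: real assumes "0 \<le> x" shows "exp (-x) \<le> 1 - x + x^2/2"
proof -
  have e: "1 + x + x^2/2 \<le> exp x" by (rule exp_lower_Taylor_quadratic[OF assms])
  have "0 \<le> x^2" by simp
  hence p: "0 < 1 + x + x^2/2" using assms by linarith
  have q: "1 \<le> (1 + x + x^2/2) * (1 - x + x^2/2)"
    using assms by (simp add: algebra_simps power2_eq_square)
  have "exp (-x) = 1 / exp x" by (simp add: exp_minus field_simps)
  also have "\<dots> \<le> 1 / (1 + x + x^2/2)" using e p by (simp add: frac_le)
  also have "\<dots> \<le> 1 - x + x^2/2" using p q by (simp add: divide_le_eq mult.commute)
  finally show ?thesis .
qed

lemma descent:
  fixes \<Phi> :: "nat \<Rightarrow> 'a set \<Rightarrow> real"
  assumes fin: "finite S"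
    and step: "\<And>i X. i < n \<Longrightarrow> X \<subseteq> S \<Longrightarrow> card X = i \<Longrightarrow> \<exists>s\<in>S - X. \<Phi> (Suc i) (insert s X) \<le> \<Phi> i X"
  shows "\<exists>X \<subseteq> S. card X = n \<and> \<Phi> n X \<le> \<Phi> 0 {}"
  using step
proof (induction n)
  case 0 thus ?case by auto
next
  case (Suc n)
  have "\<exists>X\<subseteq>S. card X = n \<and> \<Phi> n X \<le> \<Phi> 0 {}"
    by (rule Suc.IH) (rule Suc.prems, auto)
  then obtain X where X: "X \<subseteq> S" "card X = n" "\<Phi> n X \<le> \<Phi> 0 {}" by blast
  from Suc.prems[of n X] X obtain s where s: "s \<in> S - X" "\<Phi> (Suc n) (insert s X) \<le> \<Phi> n X" by auto
  have "finite X" using X fin finite_subset by auto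
  with s X show ?case
    by (intro exI[of _ "insert s X"]) auto
qed

lemma avg_exists:
  fixes h :: "'a \<Rightarrow> real"
  assumes "finite R" "R \<noteq> {}" "(\<Sum>s\<in>R. h s) \<le> real (card R) * v"
  shows "\<exists>s\<in>R. h s \<le> v"
proof (rule ccontr)
  assume "\<not> ?thesis"
  hence "\<And>s. s \<in> R \<Longrightarrow> v < h s" by auto
  hence "(\<Sum>s\<in>R. v) < (\<Sum>s\<in>R. h s)" using assms by (intro sum_strict_mono) auto
  thus False using assms by simp
qed

lemma min_aux:
  fixes a b d e :: real
  assumes "min d b \<le> e" "0 \<le> e" "0 \<le> a" "0 \<le> b"
  shows "min d (a + b) \<le> min d a + e"
  using assms by (auto simp: min_def split: if_splits)

lemma sum_min_ge:
  fixes h :: "'a \<Rightarrow> real"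
  assumes "finite R" "\<And>s. s \<in> R \<Longrightarrow> 0 \<le> h s" "0 \<le> d"
  shows "min d (\<Sum>s\<in>R. h s) \<le> (\<Sum>s\<in>R. min d (h s))"
  using assms
proof (induction R rule: finite_induct)
  case empty thus ?case by simp
next
  case (insert x F)
  have "min d (\<Sum>s\<in>F. h s) \<le> (\<Sum>s\<in>F. min d (h s))" using insert by auto
  moreover have "0 \<le> (\<Sum>s\<in>F. h s)" using insert by (intro sum_nonneg) auto
  moreover have "0 \<le> h x" using insert by auto
  moreover have "0 \<le> (\<Sum>s\<in>F. min d (h s))" using insert by (intro sum_nonneg) auto
  ultimately show ?case using insert min_aux by simp
qed



definition dgap :: "('a set \<Rightarrow> real) \<Rightarrow> real \<Rightarrow> 'a set \<Rightarrow> real" where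
  "dgap g P X = max 0 (P - g X)"


lemma weight_alg:
  fixes q r \<theta> a K P Dx :: real
  assumes r: "1 < r" and q: "0 \<le> q" and K: "K = a * \<theta>^2 * P / 2"
    and D: "0 \<le> Dx" "Dx \<le> P" and a: "0 \<le> a"
  shows "q / (r - 1) * (\<theta> * Dx - K) + (- (q / (r - 1) * \<theta>) * (1 - \<theta> * a / 2) * Dx / r)
         \<le> q / r * (\<theta> * Dx - K)"
proof -
  have r0: "r \<noteq> 0" "r - 1 \<noteq> 0" using r by auto
  define d where "d = r * (r - 1)"
  have d0: "d \<noteq> 0" using r0 by (simp add: d_def)
  have e1: "q / r * (\<theta> * Dx - K) * d = q * (r - 1) * (\<theta> * Dx - K)" using r0 by (simp add: d_def)
  have e2: "q / (r - 1) * (\<theta> * Dx - K) * d = q * r * (\<theta> * Dx - K)" using r0 by (simp add: d_def)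
  have e3: "(- (q / (r - 1) * \<theta>) * (1 - \<theta> * a / 2) * Dx / r) * d = - (q * \<theta> * (1 - \<theta> * a / 2) * Dx)"
    using r0 by (simp add: d_def)
  have "(q / r * (\<theta> * Dx - K) - (q / (r - 1) * (\<theta> * Dx - K) + (- (q / (r - 1) * \<theta>) * (1 - \<theta> * a / 2) * Dx / r))) * d
        = q * (K - \<theta>^2 * a * Dx / 2)"
    by (simp only: left_diff_distrib distrib_right e1 e2 e3) (simp add: algebra_simps power2_eq_square)
  hence "q / r * (\<theta> * Dx - K) - (q / (r - 1) * (\<theta> * Dx - K) + (- (q / (r - 1) * \<theta>) * (1 - \<theta> * a / 2) * Dx / r))
        = q * (K - \<theta>^2 * a * Dx / 2) / (r * (r - 1))"
    using d0 by (simp add: d_def eq_divide_eq)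
  moreover have "\<theta>^2 * a * Dx \<le> \<theta>^2 * a * P" using D a by (intro mult_left_mono) auto
  hence "0 \<le> K - \<theta>^2 * a * Dx / 2" using K by (simp add: algebra_simps)
  hence "0 \<le> q * (K - \<theta>^2 * a * Dx / 2) / (r * (r - 1))" using q r by simp
  ultimately show ?thesis by linarith
qed

locale gapfun =
  fixes S :: "'a set" and g :: "'a set \<Rightarrow> real" and P a :: real
  assumes fin: "finite S"
  and mono: "\<And>X Y. X \<subseteq> Y \<Longrightarrow> Y \<subseteq> S \<Longrightarrow> g X \<le> g Y"
  and nonneg: "\<And>X. X \<subseteq> S \<Longrightarrow> 0 \<le> g X"
  and marg: "\<And>X s. X \<subseteq> S \<Longrightarrow> s \<in> S \<Longrightarrow> g (insert s X) - g X \<le> a"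
  and cover: "\<And>X. X \<subseteq> S \<Longrightarrow> g S - g X \<le> (\<Sum>s\<in>S - X. g (insert s X) - g X)"
  and top: "P \<le> g S"
  and Pnn: "0 \<le> P"
  and ann: "0 \<le> a"
begin

abbreviation "D \<equiv> dgap g P"

lemma D_bounds: "X \<subseteq> S \<Longrightarrow> 0 \<le> D X \<and> D X \<le> P"
  using nonneg[of X] Pnn by (auto simp: dgap_def)

lemma D_step: assumes "X \<subseteq> S" "s \<in> S"
  shows "0 \<le> D X - D (insert s X) \<and> D X - D (insert s X) \<le> a"
proof -
  have "g X \<le> g (insert s X)" using assms by (intro mono) auto
  moreover have "g (insert s X) - g X \<le> a" using marg assms by auto
  ultimately show ?thesis using ann by (auto simp: dgap_def max_def)
qed

lemma D_sum: assumes X: "X \<subseteq> S"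
  shows "D X \<le> (\<Sum>s\<in>S - X. D X - D (insert s X))"
proof (cases "P - g X \<le> 0")
  case True
  hence "D X = 0" by (simp add: dgap_def)
  moreover have "\<And>s. s \<in> S - X \<Longrightarrow> 0 \<le> D X - D (insert s X)" using D_step X by auto
  ultimately show ?thesis by (metis sum_nonneg)
next
  case False
  define d where "d = P - g X"
  have dpos: "0 < d" using False d_def by simp
  have DX: "D X = d" using dpos by (simp add: dgap_def d_def)
  have inc: "\<And>s. s \<in> S - X \<Longrightarrow> 0 \<le> g (insert s X) - g X"
    using X by (auto intro!: mono)
  have eq: "\<And>s. s \<in> S - X \<Longrightarrow> D X - D (insert s X) = min d (g (insert s X) - g X)"
    using dpos by (auto simp: dgap_def d_def max_def min_def)
  have "min d (\<Sum>s\<in>S - X. g (insert s X) - g X) \<le> (\<Sum>s\<in>S - X. min d (g (insert s X) - g X))"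
    using fin inc dpos by (intro sum_min_ge) auto
  moreover have "d \<le> (\<Sum>s\<in>S - X. g (insert s X) - g X)"
    using cover[OF X] top d_def by linarith
  ultimately show ?thesis using eq DX by (simp add: min_absorb1)
qed

lemma exp_sum_step:
  assumes X: "X \<subseteq> S" and r: "card (S - X) = r" "0 < r"
    and u: "0 \<le> u" "u \<le> \<theta>" and ta: "\<theta> * a \<le> 2"
  shows "(\<Sum>s\<in>S - X. exp (- u * (D X - D (insert s X))))
          \<le> real r * exp (- u * (1 - \<theta> * a / 2) * D X / real r)"
proof -
  let ?c = "u * (1 - \<theta> * a / 2)"
  have c0: "0 \<le> ?c" using u ta by simp
  have termb: "exp (- u * (D X - D (insert s X))) \<le> 1 - ?c * (D X - D (insert s X))"
    if s: "s \<in> S - X" for s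
  proof -
    define t where "t = D X - D (insert s X)"
    have t: "0 \<le> t" "t \<le> a" using D_step[OF X] s t_def by auto
    have "exp (- u * t) = exp (- (u * t))" by simp
    also have "\<dots> \<le> 1 - u * t + (u * t)^2 / 2" using t u by (intro exp_neg_quad) simp
    also have "(u * t)^2 \<le> u * t * (\<theta> * a)"
    proof -
      have "(u * t)^2 = (u * t) * (u * t)" by (simp add: power2_eq_square)
      also have "\<dots> \<le> (u * t) * (\<theta> * a)" using t u
        by (intro mult_left_mono mult_mono) auto
      finally show ?thesis .
    qed
    hence "1 - u * t + (u * t)^2 / 2 \<le> 1 - ?c * t" by (simp add: algebra_simps)
    finally show ?thesis by (simp add: t_def)
  qed
  have "(\<Sum>s\<in>S - X. exp (- u * (D X - D (insert s X))))
        \<le> (\<Sum>s\<in>S - X. 1 - ?c * (D X - D (insert s X)))"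
    using termb by (intro sum_mono) auto
  also have "\<dots> = real r - ?c * (\<Sum>s\<in>S - X. D X - D (insert s X))"
    using r by (simp add: sum_subtractf sum_distrib_left[symmetric])
  also have "\<dots> \<le> real r - ?c * D X"
    using D_sum[OF X] c0 by (simp add: mult_left_mono)
  also have "\<dots> = real r * (1 + (- ?c * D X / real r))" using r by (simp add: field_simps)
  also have "\<dots> \<le> real r * exp (- ?c * D X / real r)"
    using r by (intro mult_left_mono exp_ge_add_one_self) auto
  finally show ?thesis by (simp add: mult.assoc)
qed

lemma lin_sum_step:
  assumes X: "X \<subseteq> S" and r: "card (S - X) = r"
  shows "(\<Sum>s\<in>S - X. D (insert s X)) \<le> (real r - 1) * D X"
proof -
  have "(\<Sum>s\<in>S - X. D X - D (insert s X)) = real r * D X - (\<Sum>s\<in>S - X. D (insert s X))"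
    using r by (simp add: sum_subtractf)
  with D_sum[OF X] show ?thesis by (simp add: algebra_simps)
qed


lemma color_exp_step:
  assumes X: "X \<subseteq> S" "card X = i" and i: "i < n" and n: "n < card S"
    and th: "0 \<le> \<theta>" "\<theta> * a \<le> 2" and K: "K = a * \<theta>^2 * P / 2"
  shows "(\<Sum>s\<in>S - X. exp ((real (card S) - real n) / (real (card S) - real (Suc i)) * (\<theta> * D (insert s X) - K)))
         \<le> (real (card S) - real i) * exp ((real (card S) - real n) / (real (card S) - real i) * (\<theta> * D X - K))"
proof -
  define m where "m = card S"
  define q where "q = real m - real n"
  define rr where "rr = real m - real i"
  define w' where "w' = q / (rr - 1)"
  have finX: "finite X" using X fin finite_subset by auto
  have cardR: "card (S - X) = m - i" using X finX by (simp add: card_Diff_subset m_def)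
  have rr_eq: "real (m - i) = rr" using i n by (simp add: rr_def m_def of_nat_diff)
  have rr1: "1 < rr" using i n by (simp add: rr_def m_def)
  have w'eq: "q / (real m - real (Suc i)) = w'"
    by (simp add: w'_def q_def rr_def algebra_simps)
  have q0: "0 \<le> q" using n i by (simp add: q_def m_def)
  have w'0: "0 \<le> w'" using q0 rr1 by (simp add: w'_def)
  have w'1: "w' \<le> 1" using i rr1 by (simp add: w'_def q_def rr_def)
  define u where "u = w' * \<theta>"
  have u: "0 \<le> u" "u \<le> \<theta>" using w'0 w'1 th by (auto simp: u_def mult_left_le_one_le)
  define A where "A = w' * (\<theta> * D X - K)"
  have eqs: "exp (w' * (\<theta> * D (insert s X) - K)) = exp A * exp (- u * (D X - D (insert s X)))" for s
    by (simp add: A_def u_def exp_add[symmetric] algebra_simps)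
  have "(\<Sum>s\<in>S - X. exp (w' * (\<theta> * D (insert s X) - K)))
        = exp A * (\<Sum>s\<in>S - X. exp (- u * (D X - D (insert s X))))"
    by (simp add: eqs sum_distrib_left)
  also have "\<dots> \<le> exp A * (real (m - i) * exp (- u * (1 - \<theta> * a / 2) * D X / real (m - i)))"
    using cardR i n u th by (intro mult_left_mono exp_sum_step X) (auto simp: m_def)
  also have "\<dots> = rr * exp (A + (- u * (1 - \<theta> * a / 2) * D X / rr))"
    by (simp add: rr_eq exp_add[symmetric])
  also have "\<dots> \<le> rr * exp (q / rr * (\<theta> * D X - K))"
  proof -
    have "A + (- u * (1 - \<theta> * a / 2) * D X / rr) \<le> q / rr * (\<theta> * D X - K)"
      unfolding A_def u_def w'_def
      using weight_alg[OF rr1 q0 K _ _ ann] D_bounds[OF X(1)] by blast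
    thus ?thesis using rr1 by simp
  qed
  finally show ?thesis unfolding m_def[symmetric] q_def[symmetric] rr_def[symmetric] w'eq .
qed

lemma color_lin_step:
  assumes X: "X \<subseteq> S" "card X = i" and i: "i < n" and n: "n < card S"
  shows "(\<Sum>s\<in>S - X. (real (card S) - real n) / (real (card S) - real (Suc i)) * D (insert s X))
         \<le> (real (card S) - real i) * ((real (card S) - real n) / (real (card S) - real i) * D X)"
proof -
  define m where "m = card S"
  define q where "q = real m - real n"
  define rr where "rr = real m - real i"
  have finX: "finite X" using X fin finite_subset by auto
  have cardR: "card (S - X) = m - i" using X finX by (simp add: card_Diff_subset m_def)
  have rr_eq: "real (m - i) = rr" using i n by (simp add: rr_def m_def of_nat_diff)
  have rr1: "1 < rr" using i n by (simp add: rr_def m_def)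
  have q0: "0 \<le> q" using n i by (simp add: q_def m_def)
  have "(\<Sum>s\<in>S - X. q / (rr - 1) * D (insert s X)) = q / (rr - 1) * (\<Sum>s\<in>S - X. D (insert s X))"
    by (simp add: sum_distrib_left)
  also have "\<dots> \<le> q / (rr - 1) * ((rr - 1) * D X)"
    using lin_sum_step[OF X(1) cardR] rr_eq q0 rr1 by (intro mult_left_mono) auto
  also have "\<dots> = rr * (q / rr * D X)" using rr1 by (simp add: field_simps)
  finally show ?thesis by (simp add: rr_def q_def m_def algebra_simps)
qed

end


lemma submod_cover:
  assumes sub: "submodular_set_fun V F" and T: "T \<subseteq> V" and R: "finite R" and XR: "X \<union> R \<subseteq> V"
  shows "F (X \<union> R \<union> T) - F (X \<union> T) \<le> (\<Sum>s\<in>R. F (insert s X \<union> T) - F (X \<union> T))"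
  using R XR
proof (induction R rule: finite_induct)
  case empty thus ?case by simp
next
  case (insert x R)
  have IH: "F (X \<union> R \<union> T) - F (X \<union> T) \<le> (\<Sum>s\<in>R. F (insert s X \<union> T) - F (X \<union> T))"
    using insert by auto
  have A: "insert x X \<union> T \<subseteq> V" "X \<union> R \<union> T \<subseteq> V" using insert T by auto
  have "F ((insert x X \<union> T) \<union> (X \<union> R \<union> T)) + F ((insert x X \<union> T) \<inter> (X \<union> R \<union> T))
        \<le> F (insert x X \<union> T) + F (X \<union> R \<union> T)"
    using sub[unfolded submodular_set_fun_def, rule_format, OF conjI[OF A(1) A(2)]] .
  moreover have "(insert x X \<union> T) \<union> (X \<union> R \<union> T) = X \<union> insert x R \<union> T" by auto
  moreover have "(insert x X \<union> T) \<inter> (X \<union> R \<union> T) = X \<union> T" using insert(2) by auto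
  ultimately have "F (X \<union> insert x R \<union> T) - F (X \<union> R \<union> T) \<le> F (insert x X \<union> T) - F (X \<union> T)"
    by simp
  with IH show ?case using insert(1,2) by simp
qed

lemma gapfun_inst:
  assumes finS: "finite S" and SV: "S \<subseteq> V" and T: "T \<subseteq> V"
    and nn: "nonneg_set_fun V F" and mo: "monotone_set_fun V F" and sm: "submodular_set_fun V F"
    and mg: "\<And>v. v \<in> V \<Longrightarrow> marg (\<lambda>A. F (A \<union> T)) {v} {} \<le> a"
    and top: "P \<le> F (S \<union> T)" and P0: "0 \<le> P" and a0: "0 \<le> a"
  shows "gapfun S (\<lambda>X. F (X \<union> T)) P a"
proof
  show "finite S" by fact
  show "0 \<le> P" by fact
  show "0 \<le> a" by fact
  show "P \<le> F (S \<union> T)" by fact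
  fix X Y assume "X \<subseteq> Y" "Y \<subseteq> S"
  hence "X \<union> T \<subseteq> Y \<union> T" "Y \<union> T \<subseteq> V" using SV T by auto
  thus "F (X \<union> T) \<le> F (Y \<union> T)" using mo[unfolded monotone_set_fun_def, rule_format] by blast
next
  fix X assume "X \<subseteq> S"
  hence "X \<union> T \<subseteq> V" using SV T by auto
  thus "0 \<le> F (X \<union> T)" using nn[unfolded nonneg_set_fun_def, rule_format] by blast
next
  fix X s assume X: "X \<subseteq> S" and s: "s \<in> S"
  show "F (insert s X \<union> T) - F (X \<union> T) \<le> a"
  proof (cases "s \<in> X")
    case True thus ?thesis using a0 by (simp add: insert_absorb)
  next
    case False
    have A: "insert s T \<subseteq> V" "X \<union> T \<subseteq> V" using X s SV T by auto
    have "F (insert s T \<union> (X \<union> T)) + F (insert s T \<inter> (X \<union> T)) \<le> F (insert s T) + F (X \<union> T)"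
      using sm[unfolded submodular_set_fun_def, rule_format, OF conjI[OF A(1) A(2)]] .
    moreover have "insert s T \<union> (X \<union> T) = insert s X \<union> T" by auto
    moreover have "insert s T \<inter> (X \<union> T) = T" using False by auto
    moreover have "F (insert s T) - F T \<le> a" using mg[of s] s SV by (auto simp: marg_def)
    ultimately show ?thesis by simp
  qed
next
  fix X assume X: "X \<subseteq> S"
  have "F (X \<union> (S - X) \<union> T) - F (X \<union> T) \<le> (\<Sum>s\<in>S - X. F (insert s X \<union> T) - F (X \<union> T))"
    using X SV finS by (intro submod_cover[OF sm T]) auto
  moreover have "X \<union> (S - X) = S" using X by auto
  ultimately show "F (S \<union> T) - F (X \<union> T) \<le> (\<Sum>s\<in>S - X. F (insert s X \<union> T) - F (X \<union> T))" by simp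
qed



theorem lemma6:
  fixes V :: "'a set" and C :: "'c set" and f :: "'c \<Rightarrow> 'a set \<Rightarrow> real"
    and B :: nat and T :: "'a set" and Ct :: "'c set" and \<gamma> :: real and Bt :: nat
  assumes "finite V" "V \<noteq> {}" "finite C" "C \<noteq> {}"
    and "\<And>c. c \<in> C \<Longrightarrow> nonneg_set_fun V (f c)"
    and "\<And>c. c \<in> C \<Longrightarrow> monotone_set_fun V (f c)"
    and "\<And>c. c \<in> C \<Longrightarrow> submodular_set_fun V (f c)"
    and "B > 0"
    and "T \<subseteq> V" "Ct \<subseteq> C" "Ct \<noteq> {}"
    and "\<gamma> > 0"
    and "\<And>v c. v \<in> V \<Longrightarrow> c \<in> Ct \<Longrightarrow>
           marg (\<lambda>A. f c (A \<union> T)) {v} {} \<le> \<gamma> * OPT_tilde V f Ct T B"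
    and "Bt > 0" "Bt \<le> B"
  shows "OPT_tilde V f Ct T Bt \<ge>
           (1 - sqrt (3 * \<gamma> * (real B / real Bt) * ln (real (card C))))
             * (real Bt / real B) * OPT_tilde V f Ct T B"
proof -
  note finV = assms(1) and finC = assms(3) and nnf = assms(5) and mof = assms(6) and smf = assms(7)
    and B0 = assms(8) and TV = assms(9) and CtC = assms(10) and Ctne = assms(11) and g0 = assms(12)
    and mgf = assms(13) and Bt0 = assms(14) and BtB = assms(15)
  define P where "P = OPT_tilde V f Ct T B"
  define k where "k = card C"
  define \<delta> where "\<delta> = sqrt (3 * \<gamma> * (real B / real Bt) * ln (real k))"
  define \<beta> where "\<beta> = real Bt / real B"
  define L where "L = (1 - \<delta>) * \<beta> * P"
  have finCt: "finite Ct" using CtC finC finite_subset by auto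
  have mo_ge: "L' \<le> min_obj f Ct T X" if "\<And>c. c \<in> Ct \<Longrightarrow> L' \<le> f c (X \<union> T)" for X L'
    unfolding min_obj_def using that finCt Ctne by (subst Min_ge_iff) auto
  have mo_le: "min_obj f Ct T X \<le> f c (X \<union> T)" if "c \<in> Ct" for X c
    unfolding min_obj_def using that finCt by (intro Min_le) auto
  have setEq: "{min_obj f Ct T S | S. S \<subseteq> V \<and> card S \<le> b} = (\<lambda>S. min_obj f Ct T S) ` {S. S \<subseteq> V \<and> card S \<le> b}" for b
    by auto
  have finset: "finite {min_obj f Ct T S | S. S \<subseteq> V \<and> card S \<le> b}" for b
  proof -
    have "finite {S. S \<subseteq> V \<and> card S \<le> b}"
      by (rule finite_subset[of _ "Pow V"]) (use finV in auto)
    thus ?thesis unfolding setEq by (rule finite_imageI)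
  qed
  have OPT_ge: "min_obj f Ct T X \<le> OPT_tilde V f Ct T b" if "X \<subseteq> V" "card X \<le> b" for X b
    unfolding OPT_tilde_def using that by (intro Max_ge[OF finset]) auto
  have "OPT_tilde V f Ct T B \<in> {min_obj f Ct T S | S. S \<subseteq> V \<and> card S \<le> B}"
    unfolding OPT_tilde_def by (rule Max_in[OF finset]) auto
  then obtain Sst where Sst: "Sst \<subseteq> V" "card Sst \<le> B" "min_obj f Ct T Sst = P"
    unfolding P_def by auto
  have fnn: "0 \<le> f c (X \<union> T)" if "c \<in> Ct" "X \<subseteq> V" for c X
    using nnf[of c] that CtC TV unfolding nonneg_set_fun_def by auto
  have mo_nn: "0 \<le> min_obj f Ct T X" if "X \<subseteq> V" for X
    using fnn that by (intro mo_ge) auto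
  have P0: "0 \<le> P" using mo_nn Sst by metis
  have topP: "P \<le> f c (Sst \<union> T)" if "c \<in> Ct" for c using mo_le[OF that, of Sst] Sst by simp
  have finSst: "finite Sst" using Sst finV finite_subset by auto
  have k1: "1 \<le> k" using finC assms(4) by (simp add: k_def Suc_le_eq card_gt_0_iff)
  have "0 \<le> ln (real k)" using k1 by simp
  hence \<delta>0: "0 \<le> \<delta>" unfolding \<delta>_def using g0 by (intro real_sqrt_ge_zero) simp
  have \<beta>0: "0 < \<beta>" "\<beta> \<le> 1" using Bt0 B0 BtB by (auto simp: \<beta>_def)
  have gf: "gapfun Sst (\<lambda>X. f c (X \<union> T)) P (\<gamma> * P)" if c: "c \<in> Ct" for c
  proof -
    have cC: "c \<in> C" using c CtC by auto
    show ?thesis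
    proof (rule gapfun_inst[OF finSst Sst(1) TV nnf[OF cC] mof[OF cC] smf[OF cC]])
      show "\<And>v. v \<in> V \<Longrightarrow> marg (\<lambda>A. f c (A \<union> T)) {v} {} \<le> \<gamma> * P"
        using mgf c unfolding P_def by blast
      show "P \<le> f c (Sst \<union> T)" using topP c by blast
      show "0 \<le> P" by (rule P0)
      show "0 \<le> \<gamma> * P" using P0 g0 by simp
    qed
  qed
  have main: "\<exists>X\<subseteq>V. card X \<le> Bt \<and> L \<le> min_obj f Ct T X"
  proof (cases "L \<le> 0")
    case True thus ?thesis using mo_nn[of "{}"] by (intro exI[of _ "{}"]) auto
  next
    case False
    hence Lpos: "0 < L" by simp
    have \<delta>1: "\<delta> < 1"
    proof (rule ccontr)
      assume "\<not> \<delta> < 1"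
      hence "(1 - \<delta>) * \<beta> * P \<le> 0" using \<beta>0 P0 by (intro mult_nonpos_nonneg) (auto intro: mult_nonpos_nonneg)
      thus False using Lpos L_def by simp
    qed
    have Ppos: "0 < P" using Lpos P0 unfolding L_def by (cases "P = 0") auto
    have LP: "L \<le> P"
    proof -
      have "(1 - \<delta>) * \<beta> \<le> 1 * 1" using \<delta>0 \<delta>1 \<beta>0 by (intro mult_mono) auto
      thus ?thesis using P0 \<delta>1 \<beta>0 unfolding L_def by (intro mult_left_le_one_le) auto
    qed
    show ?thesis
    proof (cases "card Sst \<le> Bt")
      case True
      have "L \<le> min_obj f Ct T Sst" using Sst LP by simp
      thus ?thesis using Sst True by blast
    next
      case False
      define m where "m = card Sst"
      define n where "n = Bt"
      have nm: "n < m" using False by (simp add: m_def n_def)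
      have mB: "m \<le> B" using Sst by (simp add: m_def)
      have xb: "\<beta> \<le> real n / real m"
        unfolding \<beta>_def n_def using mB nm Bt0 by (intro frac_le) auto
      have xle: "real n / real m \<le> 1" using nm by simp
      have m0: "0 < real m" using nm by simp
      have R_ne: "Sst - X \<noteq> {}" "finite (Sst - X)" "real (card (Sst - X)) = real m - real i"
        if "X \<subseteq> Sst" "card X = i" "i < n" for X i
      proof -
        have fX: "finite X" using that finSst finite_subset by auto
        have cd: "card (Sst - X) = m - i" using that fX by (simp add: card_Diff_subset m_def)
        thus "real (card (Sst - X)) = real m - real i" using that nm by (simp add: of_nat_diff)
        show "Sst - X \<noteq> {}" using cd that nm by auto
        show "finite (Sst - X)" using finSst by auto
      qed
      show ?thesis
      proof (cases "k = 1")
        case True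
        then obtain c0 where C1: "C = {c0}" unfolding k_def by (auto simp: card_Suc_eq)
        hence Ct1: "Ct = {c0}" using CtC Ctne by auto
        have \<delta>z: "\<delta> = 0" using True by (simp add: \<delta>_def)
        interpret G: gapfun Sst "\<lambda>X. f c0 (X \<union> T)" P "\<gamma> * P" using gf Ct1 by auto
        define \<Phi> where "\<Phi> = (\<lambda>i X. (real m - real n) / (real m - real i) * G.D X)"
        have step: "\<exists>s\<in>Sst - X. \<Phi> (Suc i) (insert s X) \<le> \<Phi> i X"
          if "i < n" "X \<subseteq> Sst" "card X = i" for i X
          using R_ne[OF that(2,3,1)] G.color_lin_step[OF that(2,3,1)] nm
          by (intro avg_exists) (auto simp: \<Phi>_def m_def)
        obtain X where X: "X \<subseteq> Sst" "card X = n" "\<Phi> n X \<le> \<Phi> 0 {}"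
          using descent[where \<Phi>=\<Phi> and n=n, OF finSst step] by blast
        have "\<Phi> n X = G.D X" using nm by (simp add: \<Phi>_def)
        moreover have "\<Phi> 0 {} \<le> (real m - real n) / real m * P"
          using G.D_bounds[of "{}"] nm unfolding \<Phi>_def by (simp only: of_nat_0 diff_zero, intro mult_left_mono) auto
        ultimately have "P - f c0 (X \<union> T) \<le> (real m - real n) / real m * P"
          using X by (simp add: dgap_def)
        hence "real n / real m * P \<le> f c0 (X \<union> T)" using m0 by (simp add: field_simps)
        moreover have "L \<le> real n / real m * P" unfolding L_def \<delta>z using xb P0 by (simp only: diff_zero mult_1_left, intro mult_right_mono)
        ultimately have "L \<le> min_obj f Ct T X" using Ct1 by (intro mo_ge) auto
        moreover have "X \<subseteq> V" "card X \<le> Bt" using X Sst n_def by auto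
        ultimately show ?thesis by blast
      next
        case False
        hence k2: "2 \<le> k" using k1 by simp
        have lnk: "0 < ln (real k)" using k2 by simp
        have \<delta>pos: "0 < \<delta>" using lnk g0 B0 Bt0 by (simp add: \<delta>_def)
        have \<delta>sq: "\<delta>^2 * \<beta> = 3 * \<gamma> * ln (real k)"
          using lnk g0 B0 Bt0 by (simp add: \<delta>_def \<beta>_def field_simps)
        define a where "a = \<gamma> * P"
        define \<theta> where "\<theta> = \<delta> / (\<gamma> * P)"
        define K where "K = a * \<theta>^2 * P / 2"
        have \<theta>0: "0 < \<theta>" using \<delta>pos g0 Ppos by (simp add: \<theta>_def)
        have \<theta>a: "\<theta> * a = \<delta>" using g0 Ppos by (simp add: \<theta>_def a_def)
        have \<theta>P: "\<theta> * P = \<delta> / \<gamma>" using g0 Ppos by (simp add: \<theta>_def)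
        have Keq: "K = \<delta>^2 / (2 * \<gamma>)" using g0 Ppos
          by (simp add: K_def a_def \<theta>_def power2_eq_square field_simps)
        define Dc where "Dc = (\<lambda>c. dgap (\<lambda>X. f c (X \<union> T)) P)"
        define \<Phi> where "\<Phi> = (\<lambda>i X. \<Sum>c\<in>Ct. exp ((real m - real n) / (real m - real i) * (\<theta> * Dc c X - K)))"
        have step: "\<exists>s\<in>Sst - X. \<Phi> (Suc i) (insert s X) \<le> \<Phi> i X"
          if i: "i < n" "X \<subseteq> Sst" "card X = i" for i X
        proof -
          have "(\<Sum>s\<in>Sst - X. \<Phi> (Suc i) (insert s X))
              = (\<Sum>c\<in>Ct. \<Sum>s\<in>Sst - X. exp ((real m - real n) / (real m - real (Suc i)) * (\<theta> * Dc c (insert s X) - K)))"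
            unfolding \<Phi>_def by (rule sum.swap)
          also have "\<dots> \<le> (\<Sum>c\<in>Ct. (real m - real i) * exp ((real m - real n) / (real m - real i) * (\<theta> * Dc c X - K)))"
          proof (rule sum_mono)
            fix c assume c: "c \<in> Ct"
            interpret G: gapfun Sst "\<lambda>X. f c (X \<union> T)" P "\<gamma> * P" using gf[OF c] .
            show "(\<Sum>s\<in>Sst - X. exp ((real m - real n) / (real m - real (Suc i)) * (\<theta> * Dc c (insert s X) - K)))
                  \<le> (real m - real i) * exp ((real m - real n) / (real m - real i) * (\<theta> * Dc c X - K))"
              using G.color_exp_step[OF i(2,3,1), of \<theta> K] nm \<theta>0 \<theta>a \<delta>1
              by (simp add: Dc_def m_def K_def a_def)
          qed
          also have "\<dots> = real (card (Sst - X)) * \<Phi> i X"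
            unfolding \<Phi>_def using R_ne[OF i(2,3,1)] by (simp add: sum_distrib_left)
          finally show ?thesis using R_ne[OF i(2,3,1)] by (intro avg_exists) auto
        qed
        obtain X where X: "X \<subseteq> Sst" "card X = n" "\<Phi> n X \<le> \<Phi> 0 {}"
          using descent[where \<Phi>=\<Phi> and n=n, OF finSst step] by blast
        have XV: "X \<subseteq> V" "card X \<le> Bt" using X Sst n_def by auto
        define x where "x = real n / real m"
        have x0: "0 \<le> x" "x \<le> 1" "\<beta> \<le> x" using xle xb by (auto simp: x_def)
        define E0 where "E0 = exp ((1 - x) * (\<theta> * P - K))"
        have Phi0: "\<Phi> 0 {} \<le> real k * E0"
        proof -
          have "\<Phi> 0 {} \<le> (\<Sum>c\<in>Ct. E0)"
            unfolding \<Phi>_def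
          proof (rule sum_mono)
            fix c assume c: "c \<in> Ct"
            interpret G: gapfun Sst "\<lambda>X. f c (X \<union> T)" P "\<gamma> * P" using gf[OF c] .
            have "Dc c {} \<le> P" using G.D_bounds[of "{}"] by (simp add: Dc_def)
            hence "\<theta> * Dc c {} - K \<le> \<theta> * P - K" using \<theta>0 by (simp add: mult_left_mono)
            hence "(1 - x) * (\<theta> * Dc c {} - K) \<le> (1 - x) * (\<theta> * P - K)" using x0
              by (intro mult_left_mono) auto
            moreover have "(real m - real n) / (real m - real 0) = 1 - x" using m0 by (simp add: x_def field_simps)
            ultimately show "exp ((real m - real n) / (real m - real 0) * (\<theta> * Dc c {} - K)) \<le> E0"
              by (simp add: E0_def)
          qed
          also have "\<dots> = real (card Ct) * E0" by simp
          also have "\<dots> \<le> real k * E0"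
            using card_mono[OF finC CtC] by (simp add: k_def E0_def mult_right_mono)
          finally show ?thesis .
        qed
        have good: "L \<le> f c (X \<union> T)" if c: "c \<in> Ct" for c
        proof (rule ccontr)
          assume "\<not> L \<le> f c (X \<union> T)"
          hence lt: "f c (X \<union> T) < L" by simp
          have "P - L < Dc c X" using lt by (simp add: Dc_def dgap_def)
          hence "\<theta> * (P - L) - K < \<theta> * Dc c X - K" using \<theta>0 by simp
          hence "exp (\<theta> * (P - L) - K) < exp (\<theta> * Dc c X - K)" by simp
          also have "exp (\<theta> * Dc c X - K) = exp ((real m - real n) / (real m - real n) * (\<theta> * Dc c X - K))"
            using nm by simp
          also have "\<dots> \<le> \<Phi> n X" unfolding \<Phi>_def
            using c finCt by (intro member_le_sum) auto
          also have "\<dots> \<le> real k * E0" using X Phi0 by simp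
          also have "\<dots> = exp (ln (real k) + (1 - x) * (\<theta> * P - K))"
            using k2 by (simp add: E0_def exp_add)
          finally have A: "\<theta> * (P - L) - K < ln (real k) + (1 - x) * (\<theta> * P - K)" by simp
          have "\<gamma> * ln (real k) \<le> \<gamma> * (x * (\<theta> * P) - (1 - \<delta>) * \<beta> * (\<theta> * P) - x * K)"
          proof -
            have r1: "\<gamma> * (x * (\<theta> * P) - (1 - \<delta>) * \<beta> * (\<theta> * P) - x * K)
                = \<delta> * (x - \<beta>) * (1 - \<delta> / 2) + \<delta>^2 * \<beta> / 2"
              unfolding \<theta>P Keq using g0 by (simp add: field_simps power2_eq_square)
            have "0 \<le> \<delta> * (x - \<beta>) * (1 - \<delta> / 2)" using \<delta>0 \<delta>1 x0 by simp
            moreover have "\<gamma> * ln (real k) = \<delta>^2 * \<beta> / 3" using \<delta>sq by simp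
            moreover have "0 \<le> \<delta>^2 * \<beta>" using \<beta>0 by simp
            ultimately show ?thesis using r1 by linarith
          qed
          hence "ln (real k) \<le> x * (\<theta> * P) - (1 - \<delta>) * \<beta> * (\<theta> * P) - x * K" using g0 by simp
          moreover have "\<theta> * L = (1 - \<delta>) * \<beta> * (\<theta> * P)" by (simp add: L_def)
          ultimately show False using A by (simp add: algebra_simps)
        qed
        have "L \<le> min_obj f Ct T X" using good by (intro mo_ge)
        thus ?thesis using XV by blast
      qed
    qed
  qed
  then obtain X where "X \<subseteq> V" "card X \<le> Bt" "L \<le> min_obj f Ct T X" by blast
  hence "L \<le> OPT_tilde V f Ct T Bt" using OPT_ge[of X Bt] by linarith
  thus ?thesis by (simp add: L_def \<delta>_def \<beta>_def P_def k_def)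
qed


end
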